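(* For all $m,n\ge 3$, the state complexity of $(V_m(a,b,c,d))^R\,V_n(d,c,b,a)$ is $3\cdot 2^{m+n-2}$.
   Context: The state complexity of a regular language is the number of states of its minimal complete DFA. For $n\ge 3$, $\mathcal{V}_n(a,b,c,d)$ is the DFA over $\{a,b,c,d\}$ with states $\{0,\dots,n-1\}$, initial state $0$, final states $\{n-1\}$, where $a$ maps $i\mapsto i+1\pmod n$; $b$ swaps $n-2$ and $n-1$ fixing other states; $c$ maps $n-1$ to $n-2$ fixing other states; $d$ is the identity. $V_n(a,b,c,d)$ is its language. $V_n(d,c,b,a)$ is the language of the DFA obtained by renaming letters: same states, initial state $0$, final states $\{n-1\}$, where $d$ maps $i\mapsto i+1\pmod n$, $c$ swaps $n-2$ and $n-1$, $b$ maps $n-1$ to $n-2$ fixing others, and $a$ is the identity. $L^R$ is the reversal of $L$, and $KL$ is concatenation. *)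

theory Defs
  imports Main
begin

datatype letter = a | b | c | d

type_synonym word = "letter list"

definition dfa_lang :: "('s \<Rightarrow> letter \<Rightarrow> 's) \<Rightarrow> 's \<Rightarrow> 's set \<Rightarrow> word set" where
  "dfa_lang delta q0 F = {w. foldl delta q0 w \<in> F}"

definition complete_dfa :: "'s set \<Rightarrow> ('s \<Rightarrow> letter \<Rightarrow> 's) \<Rightarrow> 's \<Rightarrow> 's set \<Rightarrow> bool" where
  "complete_dfa Q delta q0 F \<longleftrightarrow> finite Q \<and> q0 \<in> Q \<and> F \<subseteq> Q \<and> (\<forall>q\<in>Q. \<forall>x. delta q x \<in> Q)"

definition state_complexity :: "word set \<Rightarrow> nat" where
  "state_complexity L = (LEAST k. \<exists>(Q::nat set) delta q0 F.
      complete_dfa Q delta q0 F \<and> card Q = k \<and> dfa_lang delta q0 F = L)"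

definition rev_lang :: "word set \<Rightarrow> word set" where
  "rev_lang L = rev ` L"

definition concat_lang :: "word set \<Rightarrow> word set \<Rightarrow> word set" where
  "concat_lang K L = {u @ v | u v. u \<in> K \<and> v \<in> L}"

definition V_trans :: "nat \<Rightarrow> letter \<Rightarrow> letter \<Rightarrow> letter \<Rightarrow> letter \<Rightarrow> nat \<Rightarrow> letter \<Rightarrow> nat" where
  "V_trans n p q r s i x =
     (if x = p then (i + 1) mod n
      else if x = q then (if i = n - 2 then n - 1 else if i = n - 1 then n - 2 else i)
      else if x = r then (if i = n - 1 then n - 2 else i)
      else i)"

definition V_lang :: "nat \<Rightarrow> letter \<Rightarrow> letter \<Rightarrow> letter \<Rightarrow> letter \<Rightarrow> word set" where
  "V_lang n p q r s = dfa_lang (V_trans n p q r s) 0 {n - 1}"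

end

theory Submission
  imports Defs
begin


lemma sc_eq:
  fixes f :: "word \<Rightarrow> 's" and L :: "word set"
  assumes fin: "finite (range f)"
    and nerode1: "\<And>w1 w2 z. f w1 = f w2 \<Longrightarrow> (w1 @ z \<in> L \<longleftrightarrow> w2 @ z \<in> L)"
    and nerode2: "\<And>w1 w2. f w1 \<noteq> f w2 \<Longrightarrow> \<exists>z. (w1 @ z \<in> L) \<noteq> (w2 @ z \<in> L)"
  shows "state_complexity L = card (range f)"
  unfolding state_complexity_def
proof (rule Least_equality)
  define k where "k = card (range f)"
  obtain h where h: "bij_betw h (range f) {0..<k}"
    using ex_bij_betw_finite_nat[OF fin] k_def by blast
  have hinj: "h (f w1) = h (f w2) \<Longrightarrow> f w1 = f w2" for w1 w2
    using h unfolding bij_betw_def inj_on_def by blast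
  have hin: "h (f w) \<in> {0..<k}" for w
    using h unfolding bij_betw_def by blast
  define rep where "rep q = (SOME w. h (f w) = q)" for q
  define del where "del q x = h (f (rep q @ [x]))" for q x
  have feq: "f w1 = f w2 \<Longrightarrow> f (w1 @ [x]) = f (w2 @ [x])" for w1 w2 x
  proof (rule ccontr)
    assume "f w1 = f w2" "f (w1 @ [x]) \<noteq> f (w2 @ [x])"
    then obtain z where "(w1 @ [x] @ z \<in> L) \<noteq> (w2 @ [x] @ z \<in> L)"
      using nerode2 by fastforce
    with nerode1[OF \<open>f w1 = f w2\<close>, of "[x] @ z"] show False by simp
  qed
  have run: "foldl del (h (f [])) w = h (f w)" for w
  proof (induction w rule: rev_induct)
    case Nil then show ?case by simp
  next
    case (snoc x w)
    have "h (f (rep (h (f w)))) = h (f w)"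
      unfolding rep_def by (rule someI[of "\<lambda>v. h (f v) = h (f w)" w]) simp
    then have eq: "f (rep (h (f w))) = f w" by (rule hinj)
    have "foldl del (h (f [])) (w @ [x]) = del (h (f w)) x" using snoc by simp
    also have "\<dots> = h (f (rep (h (f w)) @ [x]))" by (simp add: del_def)
    also have "\<dots> = h (f (w @ [x]))" using feq[OF eq] by simp
    finally show ?case .
  qed
  show "\<exists>(Q::nat set) delta q0 F. complete_dfa Q delta q0 F \<and> card Q = k \<and> dfa_lang delta q0 F = L"
  proof (intro exI conjI)
    show "complete_dfa {0..<k} del (h (f [])) (h ` f ` L)"
      unfolding complete_dfa_def using hin by (auto simp: del_def)
    show "card {0..<k} = k" by simp
    show "dfa_lang del (h (f [])) (h ` f ` L) = L"
    proof -
      have "w \<in> L" if "h (f w) \<in> h ` f ` L" for w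
      proof -
        from that obtain w' where "w' \<in> L" "h (f w) = h (f w')" by auto
        then have "f w = f w'" by (rule_tac hinj) 
        with nerode1[of w w' "[]"] \<open>w' \<in> L\<close> show ?thesis by simp
      qed
      then have "{w. h (f w) \<in> h ` f ` L} = L" by blast
      then show ?thesis unfolding dfa_lang_def run .
    qed
  qed
next
  fix y
  assume "\<exists>(Q::nat set) delta q0 F. complete_dfa Q delta q0 F \<and> card Q = y \<and> dfa_lang delta q0 F = L"
  then obtain Q :: "nat set" and del q0 F where D: "complete_dfa Q del q0 F" "card Q = y" "dfa_lang del q0 F = L"
    by blast
  define g where "g w = foldl del q0 w" for w
  have gQ: "g w \<in> Q" for w
  proof -
    have "\<And>q. q \<in> Q \<Longrightarrow> foldl del q w \<in> Q"
      using D(1) unfolding complete_dfa_def by (induction w) auto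
    then show ?thesis using D(1) unfolding complete_dfa_def g_def by blast
  qed
  have gf: "g w1 = g w2 \<Longrightarrow> f w1 = f w2" for w1 w2
  proof (rule ccontr)
    assume "g w1 = g w2" "f w1 \<noteq> f w2"
    then obtain z where z: "(w1 @ z \<in> L) \<noteq> (w2 @ z \<in> L)" using nerode2 by blast
    have "w @ z \<in> L \<longleftrightarrow> foldl del (g w) z \<in> F" for w
      using D(3) unfolding dfa_lang_def g_def by auto
    with z \<open>g w1 = g w2\<close> show False by simp
  qed
  define phi where "phi v = g (SOME w. f w = v)" for v
  have "inj_on phi (range f)"
  proof (rule inj_onI)
    fix v1 v2 assume "v1 \<in> range f" "v2 \<in> range f" "phi v1 = phi v2"
    then have "f (SOME w. f w = v1) = f (SOME w. f w = v2)" unfolding phi_def by (rule_tac gf)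
    moreover have "f (SOME w. f w = v1) = v1" using \<open>v1 \<in> range f\<close> by (auto intro: someI)
    moreover have "f (SOME w. f w = v2) = v2" using \<open>v2 \<in> range f\<close> by (auto intro: someI)
    ultimately show "v1 = v2" by simp
  qed
  moreover have "phi ` range f \<subseteq> Q" using gQ unfolding phi_def by auto
  moreover have "finite Q" using D(1) unfolding complete_dfa_def by simp
  ultimately show "card (range f) \<le> y" using card_inj_on_le D(2) by blast
qed



context
  fixes m n :: nat
  assumes m3: "3 \<le> m" and n3: "3 \<le> n"
begin

abbreviation tA where "tA \<equiv> V_trans m a b c d"
abbreviation tB where "tB \<equiv> V_trans n d c b a"

definition app :: "nat set \<times> nat set \<Rightarrow> word \<Rightarrow> nat set \<times> nat set" where
  "app S u = ({i. i < m \<and> foldl tA i (rev u) \<in> fst S},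
     (\<lambda>j. foldl tB j u) ` snd S \<union>
     {foldl tB 0 u2 | u1 u2. u = u1 @ u2 \<and> foldl tA 0 (rev u1) \<in> fst S})"

definition swm :: "nat \<Rightarrow> nat" where "swm i = (if i = m-2 then m-1 else if i = m-1 then m-2 else i)"
definition cpm :: "nat \<Rightarrow> nat" where "cpm i = (if i = m-1 then m-2 else i)"
definition swn :: "nat \<Rightarrow> nat" where "swn i = (if i = n-2 then n-1 else if i = n-1 then n-2 else i)"
definition mgn :: "nat \<Rightarrow> nat" where "mgn i = (if i = n-1 then n-2 else i)"

lemma tA_simps: "tA i a = Suc i mod m" "tA i b = swm i" "tA i c = cpm i" "tA i d = i"
  by (simp_all add: V_trans_def swm_def cpm_def)

lemma tB_simps: "tB j a = j" "tB j b = mgn j" "tB j c = swn j" "tB j d = Suc j mod n"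
  by (simp_all add: V_trans_def swn_def mgn_def)

lemma zero_simps: "swm 0 = 0" "cpm 0 = 0" "swn 0 = 0" "mgn 0 = 0" "Suc 0 mod m = 1" "Suc 0 mod n = 1"
  using m3 n3 by (simp_all add: swm_def cpm_def swn_def mgn_def)

lemma tA_lt: "i < m \<Longrightarrow> tA i x < m"
  using m3 by (cases x) (auto simp: V_trans_def)

lemma tB_lt: "j < n \<Longrightarrow> tB j x < n"
  using n3 by (cases x) (auto simp: V_trans_def)

lemma foldl_tA_lt: "i < m \<Longrightarrow> foldl tA i u < m"
  by (induction u arbitrary: i) (auto simp: tA_lt)

lemma foldl_tB_lt: "j < n \<Longrightarrow> foldl tB j u < n"
  by (induction u arbitrary: j) (auto simp: tB_lt)

lemma app_fst: "fst (app S u) = {i. i < m \<and> foldl tA i (rev u) \<in> fst S}"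
  by (simp add: app_def)

lemma app_app: "app (app S u) v = app S (u @ v)"
proof -
  obtain A B where S: "S = (A, B)" by fastforce
  have f: "fst (app (app S u) v) = fst (app S (u @ v))"
    using foldl_tA_lt by (auto simp: app_def S)
  define Au where "Au = {i. i < m \<and> foldl tA i (rev u) \<in> A}"
  have 1: "snd (app (app S u) v) = (\<lambda>j. foldl tB j v) ` ((\<lambda>j. foldl tB j u) ` B \<union>
     {foldl tB 0 u2 | u1 u2. u = u1 @ u2 \<and> foldl tA 0 (rev u1) \<in> A}) \<union>
     {foldl tB 0 v2 | v1 v2. v = v1 @ v2 \<and> foldl tA 0 (rev v1) \<in> Au}"
    by (simp add: app_def S Au_def)
  have 2: "snd (app S (u @ v)) = (\<lambda>j. foldl tB j (u @ v)) ` B \<union>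
     {foldl tB 0 s2 | s1 s2. u @ v = s1 @ s2 \<and> foldl tA 0 (rev s1) \<in> A}"
    by (simp add: app_def S)
  have "snd (app (app S u) v) \<subseteq> snd (app S (u @ v))"
  proof
    fix x assume "x \<in> snd (app (app S u) v)"
    then consider (i) j where "j \<in> B" "x = foldl tB j (u @ v)"
      | (ii) u1 u2 where "u = u1 @ u2" "foldl tA 0 (rev u1) \<in> A" "x = foldl tB 0 (u2 @ v)"
      | (iii) v1 v2 where "v = v1 @ v2" "foldl tA 0 (rev v1) \<in> Au" "x = foldl tB 0 v2"
      unfolding 1 by auto
    then show "x \<in> snd (app S (u @ v))"
    proof cases
      case i then show ?thesis unfolding 2 by auto
    next
      case ii then show ?thesis unfolding 2 by auto
    next
      case iii
      then have "foldl tA 0 (rev (u @ v1)) \<in> A" by (simp add: Au_def)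
      then have "\<exists>s1 s2. x = foldl tB 0 s2 \<and> u @ v = s1 @ s2 \<and> foldl tA 0 (rev s1) \<in> A"
        using iii by (intro exI[where x="u @ v1"] exI[where x=v2]) simp
      then show ?thesis unfolding 2 by blast
    qed
  qed
  moreover have "snd (app S (u @ v)) \<subseteq> snd (app (app S u) v)"
  proof
    fix x assume "x \<in> snd (app S (u @ v))"
    then consider (i) j where "j \<in> B" "x = foldl tB j (u @ v)"
      | (ii) s1 s2 where "u @ v = s1 @ s2" "foldl tA 0 (rev s1) \<in> A" "x = foldl tB 0 s2"
      unfolding 2 by auto
    then show "x \<in> snd (app (app S u) v)"
    proof cases
      case i then show ?thesis unfolding 1 by auto
    next
      case ii
      then obtain us where "(u = s1 @ us \<and> us @ v = s2) \<or> (u @ us = s1 \<and> v = us @ s2)"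
        by (auto simp: append_eq_append_conv2)
      then show ?thesis
      proof
        assume h: "u = s1 @ us \<and> us @ v = s2"
        have mem: "foldl tB 0 us \<in> {foldl tB 0 u2 | u1 u2. u = u1 @ u2 \<and> foldl tA 0 (rev u1) \<in> A}"
          using ii h by blast
        have "x = (\<lambda>j. foldl tB j v) (foldl tB 0 us)" using h ii by auto
        then show ?thesis unfolding 1 using mem by blast
      next
        assume h: "u @ us = s1 \<and> v = us @ s2"
        then have "foldl tA 0 (rev us) \<in> Au" using ii foldl_tA_lt[of 0] m3 by (auto simp: Au_def)
        then show ?thesis unfolding 1 using h ii by blast
      qed
    qed
  qed
  ultimately show ?thesis using f by (metis prod.collapse subset_antisym)
qed

lemma app_Nil: "app (A, B) [] = ({i. i < m \<and> i \<in> A}, B \<union> (if 0 \<in> A then {0} else {}))"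
  by (auto simp: app_def)

lemma app_single: "app (A, B) [x] = ({i. i < m \<and> tA i x \<in> A},
   (\<lambda>j. tB j x) ` B \<union> (if 0 \<in> A then {tB 0 x} else {}) \<union> (if tA 0 x \<in> A then {0} else {}))"
proof -
  have sp: "[x] = u1 @ u2 \<longleftrightarrow> (u1 = [] \<and> u2 = [x]) \<or> (u1 = [x] \<and> u2 = [])" for u1 u2 :: word
    by (cases u1) auto
  have "{foldl tB 0 u2 | u1 u2. [x] = u1 @ u2 \<and> foldl tA 0 (rev u1) \<in> A}
     = (if 0 \<in> A then {tB 0 x} else {}) \<union> (if tA 0 x \<in> A then {0} else {})" (is "?L = ?R")
  proof
    show "?L \<subseteq> ?R" unfolding sp by auto
  next
    have "0 \<in> A \<Longrightarrow> tB 0 x \<in> ?L"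
      by (rule CollectI, rule exI[where x="[]"], rule exI[where x="[x]"]) simp
    moreover have "tA 0 x \<in> A \<Longrightarrow> 0 \<in> ?L"
      by (rule CollectI, rule exI[where x="[x]"], rule exI[where x="[]"]) simp
    ultimately show "?R \<subseteq> ?L" by auto
  qed
  then show ?thesis by (simp add: app_def)
qed

lemma step_a: "app (A, B) [a] = ({i. i < m \<and> Suc i mod m \<in> A}, B \<union> (if 0 \<in> A \<or> 1 \<in> A then {0} else {}))"
  using m3 n3 by (auto simp: app_single tA_simps tB_simps zero_simps)
lemma step_b: "app (A, B) [b] = ({i. i < m \<and> swm i \<in> A}, mgn ` B \<union> (if 0 \<in> A then {0} else {}))"
  using m3 n3 by (auto simp: app_single tA_simps tB_simps zero_simps)
lemma step_c: "app (A, B) [c] = ({i. i < m \<and> cpm i \<in> A}, swn ` B \<union> (if 0 \<in> A then {0} else {}))"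
  using m3 n3 by (auto simp: app_single tA_simps tB_simps zero_simps)
lemma step_d: "app (A, B) [d] = ({i. i < m \<and> i \<in> A}, (\<lambda>j. Suc j mod n) ` B \<union> (if 0 \<in> A then {0, 1} else {}))"
  using m3 n3 by (auto simp: app_single tA_simps tB_simps zero_simps)

lemma rep_snoc: "replicate (Suc k) x = replicate k x @ [x]"
  by (simp add: replicate_append_same)

lemma rep_a:
  assumes "A \<subseteq> {..<m}"
  shows "app (A, B) (replicate k a) = ({i. i < m \<and> (i + k) mod m \<in> A},
           B \<union> (if \<exists>t\<le>k. t mod m \<in> A then {0} else {}))"
proof (induction k)
  case 0
  have "{i. i < m \<and> i \<in> A} = {i. i < m \<and> i mod m \<in> A}" by auto
  then show ?case by (simp add: app_Nil)
next
  case (Suc k)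
  have "app (A, B) (replicate (Suc k) a) = app (app (A, B) (replicate k a)) [a]"
    by (simp only: app_app rep_snoc)
  also have "\<dots> = app ({i. i < m \<and> (i + k) mod m \<in> A}, B \<union> (if \<exists>t\<le>k. t mod m \<in> A then {0} else {})) [a]"
    using Suc by simp
  also have "\<dots> = ({i. i < m \<and> (i + Suc k) mod m \<in> A}, B \<union> (if \<exists>t\<le>Suc k. t mod m \<in> A then {0} else {}))"
  proof -
    have m0: "0 < m" using m3 by simp
    have e1: "(Suc i mod m + k) mod m = (i + Suc k) mod m" for i
      by (simp add: mod_add_left_eq)
    have f: "{i. i < m \<and> Suc i mod m \<in> {i. i < m \<and> (i + k) mod m \<in> A}} = {i. i < m \<and> (i + Suc k) mod m \<in> A}"
      using m0 e1 by auto
    have z0: "0 \<in> {i. i < m \<and> (i + k) mod m \<in> A} \<longleftrightarrow> k mod m \<in> A" using m0 by simp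
    have z1: "1 \<in> {i. i < m \<and> (i + k) mod m \<in> A} \<longleftrightarrow> Suc k mod m \<in> A" using m3 by simp
    have ex: "(\<exists>t\<le>Suc k. t mod m \<in> A) \<longleftrightarrow> (\<exists>t\<le>k. t mod m \<in> A) \<or> Suc k mod m \<in> A"
      by (auto simp: le_Suc_eq)
    show ?thesis unfolding step_a f z0 z1 ex by auto
  qed
  finally show ?case .
qed

lemma rep_d:
  assumes "A \<subseteq> {..<m}" "B \<subseteq> {..<n}"
  shows "app (A, B) (replicate k d) = (A, (\<lambda>j. (j + k) mod n) ` B \<union> (if 0 \<in> A then {t mod n | t. t \<le> k} else {}))"
proof (induction k)
  case 0
  have "(\<lambda>j. j mod n) ` B = id ` B" using assms(2) by (intro image_cong) auto
  then have "(\<lambda>j. j mod n) ` B = B" by simp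
  moreover have "{i. i < m \<and> i \<in> A} = A" using assms(1) by auto
  ultimately show ?case by (simp add: app_Nil)
next
  case (Suc k)
  have "app (A, B) (replicate (Suc k) d) = app (app (A, B) (replicate k d)) [d]"
    by (simp only: app_app rep_snoc)
  also have "\<dots> = app (A, (\<lambda>j. (j + k) mod n) ` B \<union> (if 0 \<in> A then {t mod n | t. t \<le> k} else {})) [d]"
    using Suc by simp
  also have "\<dots> = (A, (\<lambda>j. (j + Suc k) mod n) ` B \<union> (if 0 \<in> A then {t mod n | t. t \<le> Suc k} else {}))"
  proof -
    have f: "{i. i < m \<and> i \<in> A} = A" using assms(1) by auto
    have e1: "(\<lambda>j. Suc j mod n) ` (\<lambda>j. (j + k) mod n) ` B = (\<lambda>j. (j + Suc k) mod n) ` B"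
      by (auto simp: image_image mod_Suc_eq)
    have e2: "(\<lambda>j. Suc j mod n) ` {t mod n | t. t \<le> k} \<union> {0, 1} = {t mod n | t. t \<le> Suc k}"
    proof
      show "(\<lambda>j. Suc j mod n) ` {t mod n | t. t \<le> k} \<union> {0, 1} \<subseteq> {t mod n | t. t \<le> Suc k}"
      proof -
        have "0 \<in> {t mod n | t. t \<le> Suc k}" by force
        moreover have "1 \<in> {t mod n | t. t \<le> Suc k}"
          using n3 by (intro CollectI exI[where x=1]) simp
        moreover have "Suc (t mod n) mod n \<in> {t mod n | t. t \<le> Suc k}" if "t \<le> k" for t
          using that by (intro CollectI exI[where x="Suc t"]) (simp add: mod_Suc_eq)
        ultimately show ?thesis by auto
      qed
    next
      show "{t mod n | t. t \<le> Suc k} \<subseteq> (\<lambda>j. Suc j mod n) ` {t mod n | t. t \<le> k} \<union> {0, 1}"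
      proof
        fix x assume "x \<in> {t mod n | t. t \<le> Suc k}"
        then obtain t where t: "x = t mod n" "t \<le> Suc k" by auto
        show "x \<in> (\<lambda>j. Suc j mod n) ` {t mod n | t. t \<le> k} \<union> {0, 1}"
        proof (cases t)
          case 0 then show ?thesis using t by simp
        next
          case (Suc t')
          then have "x = (\<lambda>j. Suc j mod n) (t' mod n)" using t by (simp add: mod_Suc_eq)
          moreover have "t' mod n \<in> {t mod n | t. t \<le> k}" using Suc t by auto
          ultimately show ?thesis by blast
        qed
      qed
    qed
    show ?thesis
    proof (cases "0 \<in> A")
      case True
      have "(\<lambda>j. Suc j mod n) ` ((\<lambda>j. (j + k) mod n) ` B \<union> {t mod n | t. t \<le> k}) \<union> {0, 1}
          = (\<lambda>j. (j + Suc k) mod n) ` B \<union> {t mod n | t. t \<le> Suc k}"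
        by (simp only: image_Un e1 Un_assoc e2)
      then show ?thesis unfolding step_d f using True by simp
    next
      case False
      then show ?thesis unfolding step_d f using e1 by auto
    qed
  qed
  finally show ?case .
qed

lemma modk: "j < n \<Longrightarrow> k < n \<Longrightarrow> ((j + k) mod n = n - 1) \<longleftrightarrow> j = n - 1 - k"
proof (cases "j + k < n")
  case True then show ?thesis by auto
next
  case False
  assume "j < n" "k < n"
  then have "(j + k) mod n = j + k - n" using False by (simp add: le_mod_geq)
  then show ?thesis using False \<open>j < n\<close> \<open>k < n\<close> by auto
qed

lemma T2:
  assumes "A \<subseteq> {..<m}" "B \<subseteq> {..<n}" "k < n"
  shows "(n - 1 \<in> snd (app (A, B) (replicate k d))) \<longleftrightarrow> (n - 1 - k \<in> B \<or> (k = n - 1 \<and> 0 \<in> A))"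
proof -
  have 1: "n - 1 \<in> (\<lambda>j. (j + k) mod n) ` B \<longleftrightarrow> n - 1 - k \<in> B"
  proof
    assume "n - 1 \<in> (\<lambda>j. (j + k) mod n) ` B"
    then obtain j where "j \<in> B" "(j + k) mod n = n - 1" by auto
    then show "n - 1 - k \<in> B" using modk[of j k] assms by auto
  next
    assume h: "n - 1 - k \<in> B"
    have "(n - 1 - k + k) mod n = n - 1" using assms(3) by simp
    then show "n - 1 \<in> (\<lambda>j. (j + k) mod n) ` B" using h by force
  qed
  have 2: "n - 1 \<in> {t mod n | t. t \<le> k} \<longleftrightarrow> k = n - 1"
  proof
    assume "n - 1 \<in> {t mod n | t. t \<le> k}"
    then obtain t where "t \<le> k" "t mod n = n - 1" by auto
    then show "k = n - 1" using assms(3) by simp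
  next
    assume "k = n - 1"
    then show "n - 1 \<in> {t mod n | t. t \<le> k}" using n3 by (intro CollectI exI[where x="n-1"]) simp
  qed
  show ?thesis unfolding rep_d[OF assms(1,2)] using 1 2 by auto
qed

lemma T1:
  assumes "A \<subseteq> {..<m}" "B \<subseteq> {..<n}" "i < m"
  shows "(n - 1 \<in> snd (app (A, B) (replicate i a @ [b] @ replicate n d))) \<longleftrightarrow> i \<in> A"
proof -
  define A1 where "A1 = {j. j < m \<and> (j + i) mod m \<in> A}"
  define B1 where "B1 = B \<union> (if \<exists>t\<le>i. t mod m \<in> A then {0} else {})"
  define A2 where "A2 = {j. j < m \<and> swm j \<in> A1}"
  define B2 where "B2 = mgn ` B1 \<union> (if 0 \<in> A1 then {0} else {})"
  have "app (A, B) (replicate i a @ [b] @ replicate n d) = app (app (app (A, B) (replicate i a)) [b]) (replicate n d)"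
    by (simp add: app_app)
  also have "\<dots> = app (A2, B2) (replicate n d)"
    unfolding rep_a[OF assms(1)] step_b A2_def B2_def A1_def B1_def by simp
  finally have eq: "app (A, B) (replicate i a @ [b] @ replicate n d) = app (A2, B2) (replicate n d)" .
  have B1n: "B1 \<subseteq> {..<n}" using assms(2) n3 by (auto simp: B1_def)
  have mgn_lt: "j < n \<Longrightarrow> mgn j < n" for j using n3 by (auto simp: mgn_def)
  have mgn_ne: "mgn j \<noteq> n - 1" for j using n3 by (auto simp: mgn_def)
  have B2n: "B2 \<subseteq> {..<n}" using B1n mgn_lt n3 by (auto simp: B2_def)
  have "n - 1 \<notin> mgn ` B1" using mgn_ne by (metis imageE)
  then have B2ne: "n - 1 \<notin> B2" using n3 by (auto simp: B2_def)
  have A2m: "A2 \<subseteq> {..<m}" by (auto simp: A2_def)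
  have 1: "n - 1 \<notin> (\<lambda>j. (j + n) mod n) ` B2"
  proof
    assume "n - 1 \<in> (\<lambda>j. (j + n) mod n) ` B2"
    then obtain j where "j \<in> B2" "(j + n) mod n = n - 1" by auto
    moreover then have "j < n" using B2n by auto
    ultimately show False using B2ne by simp
  qed
  have 2: "n - 1 \<in> {t mod n | t. t \<le> n}"
    using n3 by (intro CollectI exI[where x="n-1"]) simp
  have 3: "0 \<in> A2 \<longleftrightarrow> i \<in> A"
    using assms(3) m3 by (simp add: A2_def A1_def zero_simps)
  show ?thesis unfolding eq rep_d[OF A2m B2n] using 1 2 3 by auto
qed

definition R :: "(nat set \<times> nat set) set" where
  "R = {(A, B). A \<subseteq> {..<m} \<and> B \<subseteq> {..<n} \<and> (0 \<in> A \<longrightarrow> 0 \<in> B)}"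

lemma dist:
  assumes "S1 \<in> R" "S2 \<in> R" "S1 \<noteq> S2"
  shows "\<exists>z. (n - 1 \<in> snd (app S1 z)) \<noteq> (n - 1 \<in> snd (app S2 z))"
proof -
  obtain A1 B1 A2 B2 where S: "S1 = (A1, B1)" "S2 = (A2, B2)" by fastforce
  have R1: "A1 \<subseteq> {..<m}" "B1 \<subseteq> {..<n}" "0 \<in> A1 \<longrightarrow> 0 \<in> B1" using assms(1) S by (auto simp: R_def)
  have R2: "A2 \<subseteq> {..<m}" "B2 \<subseteq> {..<n}" "0 \<in> A2 \<longrightarrow> 0 \<in> B2" using assms(2) S by (auto simp: R_def)
  show ?thesis
  proof (cases "A1 = A2")
    case False
    then obtain i where i: "(i \<in> A1) \<noteq> (i \<in> A2)" by blast
    then have "i < m" using R1 R2 by blast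
    show ?thesis
      by (rule exI[where x="replicate i a @ [b] @ replicate n d"])
         (unfold S snd_conv T1[OF R1(1,2) \<open>i < m\<close>] T1[OF R2(1,2) \<open>i < m\<close>], rule i)
  next
    case True
    then have "B1 \<noteq> B2" using assms(3) S by simp
    then obtain j where j: "(j \<in> B1) \<noteq> (j \<in> B2)" by blast
    then have "j < n" using R1 R2 by blast
    show ?thesis
    proof (cases "j = 0")
      case False
      have k: "n - 1 - j < n" "n - 1 - (n - 1 - j) = j" "n - 1 - j \<noteq> n - 1"
        using \<open>j < n\<close> False by auto
      show ?thesis
        by (rule exI[where x="replicate (n - 1 - j) d"])
           (simp only: S snd_conv T2[OF R1(1,2) k(1)] T2[OF R2(1,2) k(1)] k(2,3), insert j, auto)
    next
      case True
      have k: "n - 1 < n" "n - 1 - (n - 1) = 0" using n3 by auto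
      have "(0 \<in> B1 \<or> 0 \<in> A1) \<noteq> (0 \<in> B2 \<or> 0 \<in> A2)"
        using j True R1(3) R2(3) \<open>A1 = A2\<close> by auto
      then show ?thesis
        by (intro exI[where x="replicate (n - 1) d"])
           (simp only: S snd_conv T2[OF R1(1,2) k(1)] T2[OF R2(1,2) k(1)] k(2), simp)
    qed
  qed
qed

definition st0 :: "nat set \<times> nat set" where "st0 = ({m - 1}, {})"

abbreviation Reach where "Reach \<equiv> range (app st0)"

lemma reach_app: "S \<in> Reach \<Longrightarrow> app S u \<in> Reach"
  by (auto simp: app_app)

lemma reach_st0: "({m - 1}, {}) \<in> Reach"
proof -
  have "app st0 [] = ({m - 1}, {})" using m3 by (auto simp: st0_def app_Nil)
  then show ?thesis by (metis rangeI)
qed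

lemma reach_step: "S \<in> Reach \<Longrightarrow> app S u = S' \<Longrightarrow> S' \<in> Reach"
  using reach_app by blast

lemma sucmod: "i < m \<Longrightarrow> Suc i mod m = (if i = m - 1 then 0 else Suc i)"
  by auto

lemma P1_ind: "k \<le> m - 2 \<Longrightarrow> S \<subseteq> {m - 1 - k..m - 2} \<Longrightarrow> (S \<union> {m - 1}, {}) \<in> Reach"
proof (induction k arbitrary: S)
  case 0
  then have "S = {}" using m3 by auto
  then show ?case using reach_st0 by simp
next
  case (Suc k)
  define S0 where "S0 = Suc ` (S - {m - 2})"
  have S0sub: "S0 \<subseteq> {m - 1 - k..m - 2}"
  proof
    fix y assume "y \<in> S0"
    then obtain x where x: "x \<in> S" "x \<noteq> m - 2" "y = Suc x" by (auto simp: S0_def)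
    then have "m - 2 - k \<le> x" "x \<le> m - 2" using Suc.prems by auto
    then show "y \<in> {m - 1 - k..m - 2}" using x m3 by auto
  qed
  have r0: "(S0 \<union> {m - 1}, {}) \<in> Reach" using Suc.IH[OF _ S0sub] Suc.prems by simp
  define X where "X = (S - {m - 2}) \<union> {m - 2}"
  have n01: "0 \<notin> S0 \<union> {m - 1}" "1 \<notin> S0 \<union> {m - 1}" using S0sub Suc.prems m3 by auto
  have fX: "{i. i < m \<and> Suc i mod m \<in> S0 \<union> {m - 1}} = X"
  proof (rule set_eqI)
    fix x
    show "x \<in> {i. i < m \<and> Suc i mod m \<in> S0 \<union> {m - 1}} \<longleftrightarrow> x \<in> X"
    proof (cases "x < m - 1")
      case True
      then have "Suc x mod m = Suc x" by simp
      then show ?thesis using True Suc.prems m3 by (auto simp: S0_def X_def)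
    next
      case False
      have nX: "x \<notin> X"
      proof
        assume "x \<in> X"
        then have "x \<le> m - 2" using Suc.prems by (auto simp: X_def)
        then show False using False m3 by simp
      qed
      have "\<not> (x < m \<and> Suc x mod m \<in> S0 \<union> {m - 1})"
      proof
        assume h: "x < m \<and> Suc x mod m \<in> S0 \<union> {m - 1}"
        then have "x < m" by simp
        then have "x = m - 1" using False by linarith
        then have "Suc x mod m = 0" using m3 by simp
        then show False using h n01 by simp
      qed
      then show ?thesis using nX by simp
    qed
  qed
  have "app (S0 \<union> {m - 1}, {}) [a] = (X, {})" unfolding step_a fX using n01 by simp
  then have rX: "(X, {}) \<in> Reach" using reach_step[OF r0] by blast
  have X0: "0 \<notin> X" using Suc.prems m3 by (auto simp: X_def)
  show ?case
  proof (cases "m - 2 \<in> S")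
    case True
    have Sle: "x \<in> S \<Longrightarrow> x \<le> m - 2" for x using Suc.prems by auto
    have e: "{i. i < m \<and> cpm i \<in> X} = S \<union> {m - 1}"
    proof (rule set_eqI)
      fix x
      have X: "X = S" using True by (auto simp: X_def)
      show "x \<in> {i. i < m \<and> cpm i \<in> X} \<longleftrightarrow> x \<in> S \<union> {m - 1}"
      proof (cases "x = m - 1")
        case True then show ?thesis using \<open>m - 2 \<in> S\<close> m3 X by (simp add: cpm_def)
      next
        case False
        have "x < m" if "x \<in> S" using Sle[OF that] m3 by linarith
        then show ?thesis using False X by (auto simp: cpm_def)
      qed
    qed
    have "app (X, {}) [c] = (S \<union> {m - 1}, {})" unfolding step_c e using X0 by simp
    then show ?thesis using reach_step[OF rX] by blast
  next
    case False
    have Sle: "x \<in> S \<Longrightarrow> x \<le> m - 2" for x using Suc.prems by auto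
    have e: "{i. i < m \<and> swm i \<in> X} = S \<union> {m - 1}"
    proof (rule set_eqI)
      fix x
      have X: "X = insert (m - 2) S" by (auto simp: X_def)
      have l: "x < m" if "x \<in> S" using Sle[OF that] m3 by linarith
      show "x \<in> {i. i < m \<and> swm i \<in> X} \<longleftrightarrow> x \<in> S \<union> {m - 1}"
      proof (cases "x = m - 1")
        case True then show ?thesis using m3 X by (simp add: swm_def)
      next
        case F2: False
        show ?thesis
        proof (cases "x = m - 2")
          case True
          have "m - 1 \<notin> X"
          proof
            assume "m - 1 \<in> X"
            then have "m - 1 = m - 2 \<or> m - 1 \<in> S" using X by simp
            then show False using Sle[of "m - 1"] m3 by linarith
          qed
          then show ?thesis using True False m3 by (simp add: swm_def)
        next
          case F3: False
          then show ?thesis using F2 X l by (auto simp: swm_def)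
        qed
      qed
    qed
    have "app (X, {}) [b] = (S \<union> {m - 1}, {})" unfolding step_b e using X0 by simp
    then show ?thesis using reach_step[OF rX] by blast
  qed
qed

lemma P1: "T \<subseteq> {1..<m} \<Longrightarrow> (T, {}) \<in> Reach"
proof -
  assume T: "T \<subseteq> {1..<m}"
  have rng: "m - 1 - (m - 2) = 1" using m3 by simp
  have P: "(S \<union> {m - 1}, {}) \<in> Reach" if "S \<subseteq> {1..m - 2}" for S
  proof -
    have "S \<subseteq> {m - 1 - (m - 2)..m - 2}" unfolding rng by (rule that)
    then show ?thesis by (rule P1_ind[OF order_refl])
  qed
  show ?thesis
  proof (cases "m - 1 \<in> T")
    case True
    have "T - {m - 1} \<subseteq> {1..m - 2}" using T by auto
    from P[OF this] True show ?thesis by (simp add: insert_absorb)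
  next
    case F1: False
    show ?thesis
    proof (cases "m - 2 \<in> T")
      case False
      have "T \<subseteq> {1..m - 2}"
      proof
        fix t assume "t \<in> T"
        then have "1 \<le> t" "t < m" "t \<noteq> m - 1" "t \<noteq> m - 2" using T F1 False by auto
        then show "t \<in> {1..m - 2}" by simp
      qed
      from P[OF this] have r: "(T \<union> {m - 1}, {}) \<in> Reach" .
      have "{i. i < m \<and> cpm i \<in> T \<union> {m - 1}} = T" using T F1 False m3 by (auto simp: cpm_def)
      moreover have "0 \<notin> T \<union> {m - 1}" using T m3 by auto
      ultimately show ?thesis using reach_step[OF r, of "[c]"] by (simp add: step_c)
    next
      case True
      have "T - {m - 2} \<subseteq> {1..m - 2}"
      proof
        fix t assume "t \<in> T - {m - 2}"
        then have "1 \<le> t" "t < m" "t \<noteq> m - 1" using T F1 by auto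
        then show "t \<in> {1..m - 2}" by simp
      qed
      from P[OF this] have r: "((T - {m - 2}) \<union> {m - 1}, {}) \<in> Reach" .
      have e: "{i. i < m \<and> swm i \<in> (T - {m - 2}) \<union> {m - 1}} = T" using T F1 True m3 by (auto simp: swm_def)
      have "0 \<notin> (T - {m - 2}) \<union> {m - 1}" using T m3 by auto
      then have "app ((T - {m - 2}) \<union> {m - 1}, {}) [b] = (T, {})" unfolding step_b e by simp
      then show ?thesis using reach_step[OF r] by blast
    qed
  qed
qed

lemma rot:
  assumes "(A, B) \<in> Reach" "0 \<notin> A" "A \<subseteq> {..<m}" "B \<subseteq> {..<n}"
  shows "(A, (\<lambda>j. (j + k) mod n) ` B) \<in> Reach"
  using reach_step[OF assms(1), of "replicate k d"] rep_d[OF assms(3,4), of k] assms(2) by simp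

lemma add0:
  assumes "(A, B) \<in> Reach" "A \<noteq> {}" "A \<subseteq> {..<m}"
  shows "(A, B \<union> {0}) \<in> Reach"
proof -
  have 1: "{i. i < m \<and> (i + m) mod m \<in> A} = A" using assms(3) by auto
  obtain t where "t \<in> A" using assms(2) by blast
  then have "t < m" using assms(3) by auto
  then have 2: "\<exists>t\<le>m. t mod m \<in> A" using \<open>t \<in> A\<close> by (intro exI[where x=t]) auto
  show ?thesis using reach_step[OF assms(1), of "replicate m a"] rep_a[OF assms(3), of B m] 1 2 by simp
qed

lemma reach_ne:
  assumes "0 \<notin> A" "A \<noteq> {}" "A \<subseteq> {..<m}" "B \<subseteq> {..<n}" "B \<noteq> {}"
  shows "(A, B) \<in> Reach"
proof -
  have fin: "finite B" using assms(4) finite_subset by blast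
  have A1: "A \<subseteq> {1..<m}"
  proof
    fix x assume "x \<in> A"
    then have "x < m" using assms(3) by auto
    moreover have "x \<noteq> 0" using \<open>x \<in> A\<close> assms(1) by metis
    ultimately show "x \<in> {1..<m}" by simp
  qed
  have r0: "(A, {}) \<in> Reach" using P1[OF A1] .
  from fin assms(5) assms(4) show ?thesis
  proof (induction B rule: finite_ne_induct)
    case (singleton x)
    have "(A, {} \<union> {0}) \<in> Reach" using add0[OF r0 assms(2,3)] .
    then have "(A, {0}) \<in> Reach" by simp
    from rot[OF this assms(1,3), of x] singleton n3 show ?case by simp
  next
    case (insert x F)
    then have IH: "(A, F) \<in> Reach" and Fn: "F \<subseteq> {..<n}" and xn: "x < n" by auto
    define F1 where "F1 = (\<lambda>j. (j + (n - x)) mod n) ` F"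
    have r1: "(A, F1) \<in> Reach" unfolding F1_def by (rule rot[OF IH assms(1,3) Fn])
    have r2: "(A, F1 \<union> {0}) \<in> Reach" by (rule add0[OF r1 assms(2,3)])
    have F1n: "F1 \<union> {0} \<subseteq> {..<n}" using n3 by (auto simp: F1_def)
    have r3: "(A, (\<lambda>j. (j + x) mod n) ` (F1 \<union> {0})) \<in> Reach" by (rule rot[OF r2 assms(1,3) F1n])
    have e: "((j + (n - x)) mod n + x) mod n = j" if "j < n" for j
    proof -
      have "((j + (n - x)) mod n + x) mod n = (j + (n - x) + x) mod n" by (simp add: mod_add_left_eq)
      also have "j + (n - x) + x = j + n" using xn by simp
      finally show ?thesis using that by simp
    qed
    have "(\<lambda>j. (j + x) mod n) ` (F1 \<union> {0}) = insert x F"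
    proof -
      have "(\<lambda>j. (j + x) mod n) ` F1 = (\<lambda>j. ((j + (n - x)) mod n + x) mod n) ` F"
        by (simp add: F1_def image_image)
      also have "\<dots> = id ` F" using Fn e by (intro image_cong) auto
      finally show ?thesis using xn by auto
    qed
    with r3 show ?case by simp
  qed
qed

lemma swn_swn: "swn (swn j) = j"
  using n3 by (auto simp: swn_def)

lemma reach_no0:
  assumes "0 \<notin> A" "A \<subseteq> {..<m}" "B \<subseteq> {..<n}"
  shows "(A, B) \<in> Reach"
proof (cases "B = {}")
  case True
  have "A \<subseteq> {1..<m}"
  proof
    fix x assume "x \<in> A"
    then have "x < m" using assms(2) by auto
    moreover have "x \<noteq> 0" using \<open>x \<in> A\<close> assms(1) by metis
    ultimately show "x \<in> {1..<m}" by simp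
  qed
  then show ?thesis using P1 True by simp
next
  case Bne: False
  show ?thesis
  proof (cases "A = {}")
    case False
    then show ?thesis using reach_ne assms Bne by blast
  next
    case True
    have sw: "swn ` B \<subseteq> {..<n}" using assms(3) n3 by (auto simp: swn_def)
    have r: "({m - 1}, swn ` B) \<in> Reach" using reach_ne[of "{m - 1}" "swn ` B"] m3 sw Bne by auto
    have e1: "{i. i < m \<and> cpm i \<in> {m - 1}} = {}" using m3 by (auto simp: cpm_def)
    have e2: "swn ` swn ` B = B" by (simp add: image_image swn_swn)
    have "0 \<notin> {m - 1}" using m3 by simp
    then have "app ({m - 1}, swn ` B) [c] = ({}, B)" unfolding step_c e1 e2 by simp
    then show ?thesis using reach_step[OF r, of "[c]"] True by simp
  qed
qed

lemma a_pre:
  assumes "((\<lambda>i. Suc i mod m) ` A, B) \<in> Reach" "A \<subseteq> {..<m}" "0 \<in> B"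
  shows "(A, B) \<in> Reach"
proof -
  have inj: "i = j" if "Suc i mod m = Suc j mod m" "i < m" "j < m" for i j
  proof -
    have "Suc i mod m = (if i = m - 1 then 0 else Suc i)" using sucmod[OF that(2)] .
    moreover have "Suc j mod m = (if j = m - 1 then 0 else Suc j)" using sucmod[OF that(3)] .
    ultimately show ?thesis using that(1) by (simp split: if_splits)
  qed
  have e: "{i. i < m \<and> Suc i mod m \<in> (\<lambda>i. Suc i mod m) ` A} = A"
  proof (rule set_eqI)
    fix x
    show "x \<in> {i. i < m \<and> Suc i mod m \<in> (\<lambda>i. Suc i mod m) ` A} \<longleftrightarrow> x \<in> A"
    proof
      assume "x \<in> {i. i < m \<and> Suc i mod m \<in> (\<lambda>i. Suc i mod m) ` A}"
      then obtain y where y: "x < m" "y \<in> A" "Suc x mod m = Suc y mod m" by auto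
      then have "y < m" using assms(2) by auto
      with y inj have "x = y" by blast
      then show "x \<in> A" using y by simp
    next
      assume "x \<in> A"
      then show "x \<in> {i. i < m \<and> Suc i mod m \<in> (\<lambda>i. Suc i mod m) ` A}" using assms(2) by auto
    qed
  qed
  have u: "B \<union> (if P then {0} else {}) = B" for P using assms(3) by auto
  have "app ((\<lambda>i. Suc i mod m) ` A, B) [a] = (A, B)" unfolding step_a e u ..
  then show ?thesis using reach_step[OF assms(1)] by blast
qed

lemma reach_0i:
  assumes "0 \<in> A" "m - 1 \<notin> A" "A \<subseteq> {..<m}" "B \<subseteq> {..<n}" "0 \<in> B"
  shows "(A, B) \<in> Reach"
proof -
  have "0 \<notin> (\<lambda>i. Suc i mod m) ` A"
  proof
    assume "0 \<in> (\<lambda>i. Suc i mod m) ` A"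
    then obtain i where i: "i \<in> A" "Suc i mod m = 0" by auto
    then have "i < m" using assms(3) by auto
    from sucmod[OF this] i assms(2) show False by (auto split: if_splits)
  qed
  moreover have "(\<lambda>i. Suc i mod m) ` A \<subseteq> {..<m}" using m3 by auto
  ultimately have "((\<lambda>i. Suc i mod m) ` A, B) \<in> Reach" by (rule reach_no0[OF _ _ assms(4)])
  then show ?thesis by (rule a_pre[OF _ assms(3,5)])
qed

lemma reach_R: "S \<in> R \<Longrightarrow> S \<in> Reach"
proof -
  assume "S \<in> R"
  then obtain A B where S: "S = (A, B)" "A \<subseteq> {..<m}" "B \<subseteq> {..<n}" "0 \<in> A \<longrightarrow> 0 \<in> B"
    by (auto simp: R_def)
  show ?thesis
  proof (cases "0 \<in> A")
    case False then show ?thesis using reach_no0[OF False S(2,3)] S(1) by simp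
  next
    case A0: True
    then have B0: "0 \<in> B" using S by simp
    show ?thesis
    proof (cases "m - 1 \<in> A")
      case False then show ?thesis using reach_0i[OF A0 False S(2,3) B0] S(1) by simp
    next
      case M1: True
      show ?thesis
      proof (cases "m - 2 \<in> A")
        case False
        let ?Ap = "(\<lambda>i. Suc i mod m) ` A"
        have "Suc (m - 1) mod m = 0" using m3 by simp
        then have "0 \<in> ?Ap" using M1 by (metis image_eqI)
        moreover have "m - 1 \<notin> ?Ap"
        proof
          assume "m - 1 \<in> ?Ap"
          then obtain i where i: "i \<in> A" "Suc i mod m = m - 1" by auto
          then have "i < m" using S(2) by auto
          from sucmod[OF this] i m3 have "i = m - 2" by (auto split: if_splits)
          then show False using i False by simp
        qed
        moreover have "?Ap \<subseteq> {..<m}" using m3 by auto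
        ultimately have "(?Ap, B) \<in> Reach" by (rule reach_0i[OF _ _ _ S(3) B0])
        then have "(A, B) \<in> Reach" by (rule a_pre[OF _ S(2) B0])
        then show ?thesis using S(1) by simp
      next
        case M2: True
        have sw: "swn ` B \<subseteq> {..<n}" using S(3) n3 by (auto simp: swn_def)
        have "swn 0 \<in> swn ` B" using B0 by (rule imageI)
        then have sw0: "0 \<in> swn ` B" by (simp add: zero_simps)
        have A1: "0 \<in> A - {m - 1}" "m - 1 \<notin> A - {m - 1}" "A - {m - 1} \<subseteq> {..<m}"
          using A0 m3 S(2) by auto
        have r: "(A - {m - 1}, swn ` B) \<in> Reach" by (rule reach_0i[OF A1 sw sw0])
        have e1: "{i. i < m \<and> cpm i \<in> A - {m - 1}} = A"
        proof (rule set_eqI)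
          fix x
          show "x \<in> {i. i < m \<and> cpm i \<in> A - {m - 1}} \<longleftrightarrow> x \<in> A"
          proof (cases "x = m - 1")
            case True then show ?thesis using M1 M2 m3 by (simp add: cpm_def)
          next
            case False
            have "x \<in> A \<Longrightarrow> x < m" using S(2) by auto
            then show ?thesis using False by (auto simp: cpm_def)
          qed
        qed
        have e2: "swn ` swn ` B = B" by (simp add: image_image swn_swn)
        have u: "B \<union> (if P then {0} else {}) = B" for P using B0 by auto
        have "app (A - {m - 1}, swn ` B) [c] = (A, B)" unfolding step_c e1 e2 u ..
        then show ?thesis using reach_step[OF r] S(1) by blast
      qed
    qed
  qed
qed

lemma inv: "app st0 w \<in> R"
proof -
  have f: "fst (app st0 w) \<subseteq> {..<m}" by (auto simp: app_def)
  have s: "snd (app st0 w) \<subseteq> {..<n}" using foldl_tB_lt[of 0] n3 by (auto simp: app_def st0_def)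
  have z: "0 \<in> snd (app st0 w)" if "0 \<in> fst (app st0 w)"
  proof -
    have "foldl tA 0 (rev w) = m - 1" using that by (simp add: app_def st0_def)
    then have "\<exists>u1 u2. (0::nat) = foldl tB 0 u2 \<and> w = u1 @ u2 \<and> foldl tA 0 (rev u1) \<in> fst st0"
      by (intro exI[where x=w] exI[where x="[]"]) (simp add: st0_def)
    then show ?thesis by (simp add: app_def)
  qed
  show ?thesis using f s z unfolding R_def by (cases "app st0 w") auto
qed

lemma lang: "w \<in> concat_lang (rev_lang (V_lang m a b c d)) (V_lang n d c b a) \<longleftrightarrow> n - 1 \<in> snd (app st0 w)"
proof -
  have "w \<in> concat_lang (rev_lang (V_lang m a b c d)) (V_lang n d c b a) \<longleftrightarrow>
        (\<exists>u v. w = u @ v \<and> foldl tA 0 (rev u) = m - 1 \<and> foldl tB 0 v = n - 1)"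
  proof
    assume "w \<in> concat_lang (rev_lang (V_lang m a b c d)) (V_lang n d c b a)"
    then obtain u v x where h: "w = u @ v" "u = rev x" "foldl tA 0 x = m - 1" "foldl tB 0 v = n - 1"
      by (auto simp: concat_lang_def rev_lang_def V_lang_def dfa_lang_def)
    then show "\<exists>u v. w = u @ v \<and> foldl tA 0 (rev u) = m - 1 \<and> foldl tB 0 v = n - 1"
      by (intro exI[where x=u] exI[where x=v]) simp
  next
    assume "\<exists>u v. w = u @ v \<and> foldl tA 0 (rev u) = m - 1 \<and> foldl tB 0 v = n - 1"
    then obtain u v where h: "w = u @ v" "foldl tA 0 (rev u) = m - 1" "foldl tB 0 v = n - 1" by blast
    have "u \<in> rev_lang (V_lang m a b c d)"
      unfolding rev_lang_def V_lang_def dfa_lang_def using h(2)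
      by (intro image_eqI[where x="rev u"]) auto
    moreover have "v \<in> V_lang n d c b a" unfolding V_lang_def dfa_lang_def using h(3) by simp
    ultimately show "w \<in> concat_lang (rev_lang (V_lang m a b c d)) (V_lang n d c b a)"
      unfolding concat_lang_def using h(1) by blast
  qed
  also have "\<dots> \<longleftrightarrow> n - 1 \<in> snd (app st0 w)"
  proof -
    have "snd (app st0 w) = {foldl tB 0 u2 | u1 u2. w = u1 @ u2 \<and> foldl tA 0 (rev u1) = m - 1}"
      by (simp add: app_def st0_def)
    moreover have "(\<exists>u v. w = u @ v \<and> foldl tA 0 (rev u) = m - 1 \<and> foldl tB 0 v = n - 1) \<longleftrightarrow>
       n - 1 \<in> {foldl tB 0 u2 | u1 u2. w = u1 @ u2 \<and> foldl tA 0 (rev u1) = m - 1}"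
    proof
      assume "\<exists>u v. w = u @ v \<and> foldl tA 0 (rev u) = m - 1 \<and> foldl tB 0 v = n - 1"
      then obtain u v where "w = u @ v" "foldl tA 0 (rev u) = m - 1" "foldl tB 0 v = n - 1" by blast
      then show "n - 1 \<in> {foldl tB 0 u2 | u1 u2. w = u1 @ u2 \<and> foldl tA 0 (rev u1) = m - 1}"
        by (intro CollectI exI[where x=u] exI[where x=v]) simp
    next
      assume "n - 1 \<in> {foldl tB 0 u2 | u1 u2. w = u1 @ u2 \<and> foldl tA 0 (rev u1) = m - 1}"
      then obtain u v where "n - 1 = foldl tB 0 v" "w = u @ v" "foldl tA 0 (rev u) = m - 1" by blast
      then show "\<exists>u v. w = u @ v \<and> foldl tA 0 (rev u) = m - 1 \<and> foldl tB 0 v = n - 1" by metis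
    qed
    ultimately show ?thesis by simp
  qed
  finally show ?thesis .
qed

lemma card_R: "card R = 3 * 2 ^ (m + n - 2)"
proof -
  define P1 where "P1 = Pow {1..<m} \<times> Pow {..<n}"
  define g where "g = (\<lambda>(A, B). (insert (0::nat) A, insert (0::nat) B))"
  define P2 where "P2 = g ` (Pow {1..<m} \<times> Pow {1..<n})"
  have eq: "R = P1 \<union> P2"
  proof
    show "R \<subseteq> P1 \<union> P2"
    proof
      fix S assume "S \<in> R"
      then obtain A B where S: "S = (A, B)" "A \<subseteq> {..<m}" "B \<subseteq> {..<n}" "0 \<in> A \<longrightarrow> 0 \<in> B"
        by (auto simp: R_def)
      show "S \<in> P1 \<union> P2"
      proof (cases "0 \<in> A")
        case False
        have "A \<subseteq> {1..<m}"
        proof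
          fix x assume "x \<in> A"
          moreover then have "x \<noteq> 0" using False by metis
          ultimately show "x \<in> {1..<m}" using S(2) by auto
        qed
        then show ?thesis using S by (auto simp: P1_def)
      next
        case True
        then have "0 \<in> B" using S by simp
        have "A - {0} \<subseteq> {1..<m}" "B - {0} \<subseteq> {1..<n}" using S(2,3) by auto
        moreover have "S = g (A - {0}, B - {0})" using S(1) True \<open>0 \<in> B\<close> by (auto simp: g_def)
        ultimately show ?thesis unfolding P2_def by blast
      qed
    qed
  next
    have "P1 \<subseteq> R"
    proof
      fix S assume "S \<in> P1"
      then obtain A B where "S = (A, B)" "A \<subseteq> {1..<m}" "B \<subseteq> {..<n}" by (auto simp: P1_def)
      then show "S \<in> R" unfolding R_def by auto
    qed
    moreover have "P2 \<subseteq> R"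
    proof
      fix S assume "S \<in> P2"
      then obtain A B where "S = (insert 0 A, insert 0 B)" "A \<subseteq> {1..<m}" "B \<subseteq> {1..<n}"
        by (auto simp: P2_def g_def)
      then show "S \<in> R" unfolding R_def using m3 n3 by auto
    qed
    ultimately show "P1 \<union> P2 \<subseteq> R" by blast
  qed
  have disj: "P1 \<inter> P2 = {}"
  proof -
    have "0 \<notin> fst S" if "S \<in> P1" for S using that by (auto simp: P1_def)
    moreover have "0 \<in> fst S" if "S \<in> P2" for S using that by (auto simp: P2_def g_def)
    ultimately show ?thesis by blast
  qed
  have fin1: "finite P1" by (simp add: P1_def)
  have fin2: "finite P2" by (simp add: P2_def)
  have c1: "card P1 = 2 ^ (m - 1) * 2 ^ n" by (simp add: P1_def card_cartesian_product card_Pow)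
  have inj: "inj_on g (Pow {1..<m} \<times> Pow {1..<n})"
  proof (rule inj_onI)
    fix x y assume "x \<in> Pow {1..<m} \<times> Pow {1..<n}" "y \<in> Pow {1..<m} \<times> Pow {1..<n}" "g x = g y"
    moreover obtain A B where x: "x = (A, B)" by fastforce
    moreover obtain A' B' where y: "y = (A', B')" by fastforce
    ultimately have h: "A \<subseteq> {1..<m}" "A' \<subseteq> {1..<m}" "B \<subseteq> {1..<n}" "B' \<subseteq> {1..<n}"
      "insert 0 A = insert 0 A'" "insert 0 B = insert 0 B'" by (auto simp: g_def)
    have "0 \<notin> A" "0 \<notin> A'" "0 \<notin> B" "0 \<notin> B'" using h(1-4) by auto
    then have "A = A'" "B = B'" using h(5,6) insert_ident by metis+
    then show "x = y" using x y by simp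
  qed
  have c2: "card P2 = 2 ^ (m - 1) * 2 ^ (n - 1)"
    unfolding P2_def card_image[OF inj] by (simp add: card_cartesian_product card_Pow)
  have "card R = 2 ^ (m - 1) * 2 ^ n + 2 ^ (m - 1) * 2 ^ (n - 1)"
    unfolding eq using card_Un_disjoint[OF fin1 fin2 disj] c1 c2 by simp
  also have "\<dots> = 3 * 2 ^ (m + n - 2)"
  proof -
    obtain p where p: "m = Suc p" using m3 by (cases m) auto
    obtain q where q: "n = Suc q" using n3 by (cases n) auto
    note pq = p q
    then show ?thesis by (simp add: power_add)
  qed
  finally show ?thesis .
qed

lemma main: "state_complexity (concat_lang (rev_lang (V_lang m a b c d)) (V_lang n d c b a)) = 3 * 2 ^ (m + n - 2)"
proof -
  let ?L = "concat_lang (rev_lang (V_lang m a b c d)) (V_lang n d c b a)"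
  have rng: "range (app st0) = R"
    using inv reach_R by blast
  have finR: "finite R"
  proof -
    have "R \<subseteq> Pow {..<m} \<times> Pow {..<n}" by (auto simp: R_def)
    then show ?thesis by (rule finite_subset) simp
  qed
  have "state_complexity ?L = card (range (app st0))"
  proof (rule sc_eq)
    show "finite (range (app st0))" using rng finR by simp
  next
    fix w1 w2 z assume "app st0 w1 = app st0 w2"
    then show "(w1 @ z \<in> ?L) = (w2 @ z \<in> ?L)" unfolding lang by (simp add: app_app[symmetric])
  next
    fix w1 w2 assume "app st0 w1 \<noteq> app st0 w2"
    then obtain z where "(n - 1 \<in> snd (app (app st0 w1) z)) \<noteq> (n - 1 \<in> snd (app (app st0 w2) z))"
      using dist[OF inv inv] by blast
    then show "\<exists>z. (w1 @ z \<in> ?L) \<noteq> (w2 @ z \<in> ?L)" unfolding lang by (auto simp: app_app)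
  qed
  then show ?thesis using rng card_R by simp
qed

end

theorem theorem5:
  fixes m n :: nat
  assumes "m \<ge> 3" and "n \<ge> 3"
  shows "state_complexity (concat_lang (rev_lang (V_lang m a b c d)) (V_lang n d c b a))
           = 3 * 2 ^ (m + n - 2)"
  using main[OF assms] .

end
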